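(* Let $m\ge 3$ be an integer and let $f(x_1,x_2,x_3)=a_1P_m(x_1)+a_2P_m(x_2)+a_3P_m(x_3)$ with $a_1,a_2,a_3$ positive integers. Let $L=\mathbb{Z}\mathbf{e}_1+\mathbb{Z}\mathbf{e}_2+\mathbb{Z}\mathbf{e}_3$ be a $\mathbb{Z}$-lattice with Gram matrix $(B(\mathbf{e}_i,\mathbf{e}_j))=\mathrm{diag}(a_1c^2,a_2c^2,a_3c^2)$, and let $\mathbf{v}=-\frac{d}{c}(\mathbf{e}_1+\mathbf{e}_2+\mathbf{e}_3)\in\mathbb{Q}L$. Then $f$ is regular if and only if the $\mathbb{Z}$-coset $L+\mathbf{v}$ is tight regular.
   Context: $P_m(x)=\frac{(m-2)x^2-(m-4)x}{2}$. Define $\delta=4$ if $m$ is odd, $\delta=2$ if $m\equiv2\pmod4$, $\delta=1$ if $m\equiv0\pmod4$; $c=\delta\frac{m-2}{2}$, $d=\delta\frac{m-4}{4}$. An integer $n$ is locally represented by $f$ if $f=n$ is solvable over $\mathbb{Z}_p$ for every prime $p$ and over $\mathbb{R}$; $f$ is regular if it represents (over $\mathbb{Z}$) every nonnegative integer locally represented by $f$. For the coset: $Q$ is the quadratic map of $\mathbb{Q}L$ with $B(\mathbf{x},\mathbf{y})=\frac12(Q(\mathbf{x}+\mathbf{y})-Q(\mathbf{x})-Q(\mathbf{y}))$; an integer $n$ is represented by $L+\mathbf{v}$ if $n=Q(\mathbf{x}+\mathbf{v})$ for some $\mathbf{x}\in L$, and locally represented if for every prime $p$ there is $\mathbf{x}_p\in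 L\otimes\mathbb{Z}_p$ with $Q(\mathbf{x}_p+\mathbf{v})=n$. With $\min(L+\mathbf{v})=\min\{Q(\mathbf{x}+\mathbf{v}):\mathbf{x}\in L\}$, the coset $L+\mathbf{v}$ is tight regular if it represents every locally represented integer that is $\ge\min(L+\mathbf{v})$. *)

theory Defs
  imports "HOL-Number_Theory.Number_Theory" Complex_Main
begin

(* m-gonal number P_m(x) = ((m-2)x^2 - (m-4)x)/2; the numerator is always even
   (it equals (m-2)(x^2-x) + 2x), so integer division is exact. *)
definition polyg :: "int \<Rightarrow> int \<Rightarrow> int" where
  "polyg m x = ((m - 2) * x^2 - (m - 4) * x) div 2"

definition polygR :: "int \<Rightarrow> real \<Rightarrow> real" where
  "polygR m x = ((real_of_int m - 2) * x^2 - (real_of_int m - 4) * x) / 2"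

definition delta :: "int \<Rightarrow> int" where
  "delta m = (if odd m then 4 else if m mod 4 = 2 then 2 else 1)"

(* c = delta (m-2)/2 and d = delta (m-4)/4 ; both are integers (exact divisions) *)
definition cc :: "int \<Rightarrow> int" where
  "cc m = delta m * (m - 2) div 2"

definition dd :: "int \<Rightarrow> int" where
  "dd m = delta m * (m - 4) div 4"

definition fform :: "int \<Rightarrow> int \<Rightarrow> int \<Rightarrow> int \<Rightarrow> int \<Rightarrow> int \<Rightarrow> int \<Rightarrow> int" where
  "fform m a1 a2 a3 x1 x2 x3 = a1 * polyg m x1 + a2 * polyg m x2 + a3 * polyg m x3"

definition fformR :: "int \<Rightarrow> int \<Rightarrow> int \<Rightarrow> int \<Rightarrow> real \<Rightarrow> real \<Rightarrow> real \<Rightarrow> real" where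
  "fformR m a1 a2 a3 x1 x2 x3 =
     of_int a1 * polygR m x1 + of_int a2 * polygR m x2 + of_int a3 * polygR m x3"

(* Solvability of f = n over Z_p, expressed (no p-adic integers in the library)
   as solvability modulo every power p^k; by compactness of Z_p and density of Z
   in Z_p this is equivalent to solvability over Z_p. *)
definition f_loc_Zp :: "int \<Rightarrow> int \<Rightarrow> int \<Rightarrow> int \<Rightarrow> int \<Rightarrow> int \<Rightarrow> bool" where
  "f_loc_Zp m a1 a2 a3 p n =
     (\<forall>k::nat. \<exists>x1 x2 x3 :: int. [fform m a1 a2 a3 x1 x2 x3 = n] (mod p ^ k))"

definition f_loc_rep :: "int \<Rightarrow> int \<Rightarrow> int \<Rightarrow> int \<Rightarrow> int \<Rightarrow> bool" where
  "f_loc_rep m a1 a2 a3 n =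
     ((\<forall>p::int. prime p \<longrightarrow> f_loc_Zp m a1 a2 a3 p n) \<and>
      (\<exists>x1 x2 x3 :: real. fformR m a1 a2 a3 x1 x2 x3 = of_int n))"

definition f_rep :: "int \<Rightarrow> int \<Rightarrow> int \<Rightarrow> int \<Rightarrow> int \<Rightarrow> bool" where
  "f_rep m a1 a2 a3 n = (\<exists>x1 x2 x3 :: int. fform m a1 a2 a3 x1 x2 x3 = n)"

definition f_regular :: "int \<Rightarrow> int \<Rightarrow> int \<Rightarrow> int \<Rightarrow> bool" where
  "f_regular m a1 a2 a3 =
     (\<forall>n::int. n \<ge> 0 \<longrightarrow> f_loc_rep m a1 a2 a3 n \<longrightarrow> f_rep m a1 a2 a3 n)"

(* The lattice L = Z e1 + Z e2 + Z e3 with Gram matrix diag(g1,g2,g3), vectors of QL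
   written in coordinates w.r.t. e1,e2,e3 (embedded in the reals); its quadratic map is
   Q(y1 e1 + y2 e2 + y3 e3) = g1 y1^2 + g2 y2^2 + g3 y3^2. *)
definition Qdiag :: "int \<Rightarrow> int \<Rightarrow> int \<Rightarrow> real \<Rightarrow> real \<Rightarrow> real \<Rightarrow> real" where
  "Qdiag g1 g2 g3 y1 y2 y3 = of_int g1 * y1^2 + of_int g2 * y2^2 + of_int g3 * y3^2"

definition coset_val :: "int \<Rightarrow> int \<Rightarrow> int \<Rightarrow> real \<Rightarrow> real \<Rightarrow> real \<Rightarrow> int \<Rightarrow> int \<Rightarrow> int \<Rightarrow> real" where
  "coset_val g1 g2 g3 v1 v2 v3 x1 x2 x3 =
     Qdiag g1 g2 g3 (of_int x1 + v1) (of_int x2 + v2) (of_int x3 + v3)"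

definition coset_rep :: "int \<Rightarrow> int \<Rightarrow> int \<Rightarrow> real \<Rightarrow> real \<Rightarrow> real \<Rightarrow> int \<Rightarrow> bool" where
  "coset_rep g1 g2 g3 v1 v2 v3 n =
     (\<exists>x1 x2 x3 :: int. coset_val g1 g2 g3 v1 v2 v3 x1 x2 x3 = of_int n)"

(* local representation at p: Q(x_p + v) = n for some x_p in L (x) Z_p, rendered as
   Q(x + v) - n \<in> p^k Z for some x in L, for every k *)
definition coset_loc_rep :: "int \<Rightarrow> int \<Rightarrow> int \<Rightarrow> real \<Rightarrow> real \<Rightarrow> real \<Rightarrow> int \<Rightarrow> bool" where
  "coset_loc_rep g1 g2 g3 v1 v2 v3 n =
     (\<forall>p::int. prime p \<longrightarrow> (\<forall>k::nat. \<exists>x1 x2 x3 t :: int.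
        coset_val g1 g2 g3 v1 v2 v3 x1 x2 x3 = of_int n + of_int (p ^ k) * of_int t))"

definition coset_min :: "int \<Rightarrow> int \<Rightarrow> int \<Rightarrow> real \<Rightarrow> real \<Rightarrow> real \<Rightarrow> real" where
  "coset_min g1 g2 g3 v1 v2 v3 =
     Inf {coset_val g1 g2 g3 v1 v2 v3 x1 x2 x3 | x1 x2 x3. True}"

definition coset_tight_regular :: "int \<Rightarrow> int \<Rightarrow> int \<Rightarrow> real \<Rightarrow> real \<Rightarrow> real \<Rightarrow> bool" where
  "coset_tight_regular g1 g2 g3 v1 v2 v3 =
     (\<forall>n::int. coset_loc_rep g1 g2 g3 v1 v2 v3 n \<longrightarrow>
        real_of_int n \<ge> coset_min g1 g2 g3 v1 v2 v3 \<longrightarrow> coset_rep g1 g2 g3 v1 v2 v3 n)"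

end

theory Submission
  imports Defs
begin
lemma basics:
  fixes m :: int assumes "m \<ge> 3"
  shows "2 * cc m = delta m * (m - 2)" "4 * dd m = delta m * (m - 4)"
        "delta m > 0" "cc m > 0"
proof -
  consider "odd m" "delta m = 4" | "even m" "m mod 4 = 2" "delta m = 2" | "even m" "m mod 4 = 0" "delta m = 1"
  proof -
    have "even m \<Longrightarrow> m mod 4 \<noteq> 2 \<Longrightarrow> m mod 4 = 0" by presburger
    then show ?thesis using that unfolding delta_def by (cases "odd m"; cases "m mod 4 = 2") auto
  qed
  note cs = this
  show a: "2 * cc m = delta m * (m - 2)"
  proof (cases rule: cs)
    case 1 then show ?thesis unfolding cc_def by simp
  next
    case 2 then show ?thesis unfolding cc_def by simp
  next
    case 3 then have "even (m - 2)" by simp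
    then show ?thesis unfolding cc_def using 3 by simp
  qed
  show "4 * dd m = delta m * (m - 4)"
  proof (cases rule: cs)
    case 1 then show ?thesis unfolding dd_def by simp
  next
    case 2 then have "(2 * (m - 4)) mod 4 = 0" by presburger
    then show ?thesis unfolding dd_def using 2 by (simp add: dvd_eq_mod_eq_0[symmetric])
  next
    case 3 then have "(m - 4) mod 4 = 0" by presburger
    then show ?thesis unfolding dd_def using 3 by (simp add: dvd_eq_mod_eq_0[symmetric])
  qed
  show dp: "delta m > 0" unfolding delta_def by auto
  have "2 * cc m > 0" using a dp assms by simp
  then show "cc m > 0" by simp
qed

lemma polyg2: "2 * polyg m x = (m - 2) * x^2 - (m - 4) * x"
proof -
  have "(m - 2) * x^2 - (m - 4) * x = (m - 2) * (x * (x - 1)) + 2 * x"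
    by (simp add: power2_eq_square algebra_simps)
  moreover have "even (x * (x - 1))" by simp
  ultimately have "even ((m - 2) * x^2 - (m - 4) * x)" by simp
  then show ?thesis unfolding polyg_def by simp
qed

lemma polyg_nonneg: assumes "m \<ge> 3" shows "polyg m x \<ge> 0"
proof -
  have "x * ((m - 2) * x - (m - 4)) \<ge> 0"
  proof (cases "x \<ge> 1")
    case True
    have "(m - 2) * x \<ge> (m - 2) * 1" using True assms by (intro mult_left_mono) auto
    then have "(m - 2) * x - (m - 4) \<ge> 0" by simp
    then show ?thesis using True by simp
  next
    case False
    show ?thesis
    proof (cases "x = 0")
      case False
      then have "x \<le> -1" using \<open>\<not> x \<ge> 1\<close> by simp
      have "(m - 2) * x \<le> (m - 2) * (-1)" using \<open>x \<le> -1\<close> assms by (intro mult_left_mono) auto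
      then have "(m - 2) * x - (m - 4) \<le> 0" using assms by simp
      then show ?thesis using \<open>x \<le> -1\<close> by (simp add: mult_nonpos_nonpos)
    qed simp
  qed
  then have "2 * polyg m x \<ge> 0" unfolding polyg2 by (simp add: power2_eq_square algebra_simps)
  then show ?thesis by simp
qed

lemma ident:
  fixes m :: int assumes "m \<ge> 3"
  shows "(cc m * x - dd m)^2 = delta m * cc m * polyg m x + (dd m)^2"
proof -
  note b = basics[OF assms]
  have "16 * (cc m * x - dd m)^2 = (2 * (2 * cc m) * x - 4 * dd m)^2"
    by (simp add: power2_eq_square algebra_simps)
  also have "\<dots> = (2 * (delta m * (m - 2)) * x - delta m * (m - 4))^2" using b by simp
  also have "\<dots> = 4 * delta m * (delta m * (m - 2)) * ((m - 2) * x^2 - (m - 4) * x) + (delta m * (m - 4))^2"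
    by (simp add: power2_eq_square algebra_simps)
  also have "\<dots> = 4 * delta m * (2 * cc m) * (2 * polyg m x) + (4 * dd m)^2"
    using b polyg2 by simp
  also have "\<dots> = 16 * (delta m * cc m * polyg m x + (dd m)^2)"
    by (simp add: power2_eq_square algebra_simps)
  finally show ?thesis by simp
qed

lemma kv:
  fixes m :: int assumes "m \<ge> 3"
  shows "coset_val (a1 * (cc m)^2) (a2 * (cc m)^2) (a3 * (cc m)^2)
      (- (of_int (dd m) / of_int (cc m))) (- (of_int (dd m) / of_int (cc m)))
      (- (of_int (dd m) / of_int (cc m))) x1 x2 x3
   = of_int (delta m * cc m * fform m a1 a2 a3 x1 x2 x3 + (dd m)^2 * (a1 + a2 + a3))"
proof -
  have c0: "real_of_int (cc m) \<noteq> 0" using basics[OF assms] by simp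
  have one: "real_of_int (cc m)^2 * (of_int x - of_int (dd m) / of_int (cc m))^2
      = of_int (delta m * cc m * polyg m x + (dd m)^2)" for x
  proof -
    have "real_of_int (cc m)^2 * (of_int x - of_int (dd m) / of_int (cc m))^2
        = (of_int (cc m) * of_int x - of_int (dd m))^2"
      using c0 by (simp add: power2_eq_square field_simps)
    also have "\<dots> = of_int ((cc m * x - dd m)^2)" by simp
    finally show ?thesis using ident[OF assms, of x] by simp
  qed
  show ?thesis
    unfolding coset_val_def Qdiag_def fform_def
    using one[of x1] one[of x2] one[of x3]
    by (simp add: algebra_simps)
qed

lemma real_rep:
  fixes m a1 a2 a3 n :: int
  assumes "m \<ge> 3" "a1 > 0" "n \<ge> 0"
  shows "\<exists>x1 x2 x3 :: real. fformR m a1 a2 a3 x1 x2 x3 = of_int n"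
proof -
  define f where "f = (\<lambda>x::real. of_int a1 * polygR m x)"
  define b where "b = real_of_int n + 1"
  have b1: "b \<ge> 1" using assms b_def by simp
  have "(real_of_int m - 2) * (b * (b - 1)) \<ge> 0" using b1 assms by simp
  then have "2 * polygR m b \<ge> 2 * b" unfolding polygR_def by (simp add: power2_eq_square algebra_simps)
  then have pb: "polygR m b \<ge> b" by simp
  have "f b \<ge> polygR m b" unfolding f_def using pb b1 assms
    by (smt (verit) mult_le_cancel_right1 of_int_less_1_iff)
  then have "f b \<ge> of_int n" using pb b_def by simp
  moreover have "f 0 \<le> of_int n" unfolding f_def polygR_def using assms by simp
  moreover have "\<forall>x. 0 \<le> x \<and> x \<le> b \<longrightarrow> isCont f x" unfolding f_def polygR_def by (intro allI impI continuous_intros) auto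
  ultimately obtain x where "f x = of_int n" using IVT[of f 0 "of_int n" b] b1 by auto
  then have "fformR m a1 a2 a3 x 0 0 = of_int n" unfolding fformR_def f_def polygR_def by simp
  then show ?thesis by blast
qed

lemma fzero: "fform m a1 a2 a3 0 0 0 = 0" unfolding fform_def polyg_def by simp

lemma fnonneg: assumes "m \<ge> 3" "a1 > 0" "a2 > 0" "a3 > 0" shows "fform m a1 a2 a3 x1 x2 x3 \<ge> 0"
  unfolding fform_def using polyg_nonneg[OF assms(1)] assms by (simp add: add_nonneg_nonneg)

theorem proposition3p1:
  fixes m a1 a2 a3 :: int
  assumes "m \<ge> 3" and "a1 > 0" and "a2 > 0" and "a3 > 0"
  shows "f_regular m a1 a2 a3 \<longleftrightarrow>
    coset_tight_regular (a1 * (cc m)^2) (a2 * (cc m)^2) (a3 * (cc m)^2)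
      (- (of_int (dd m) / of_int (cc m))) (- (of_int (dd m) / of_int (cc m)))
      (- (of_int (dd m) / of_int (cc m)))"
proof -
  let ?V = "- (of_int (dd m) / of_int (cc m)) :: real"
  let ?g1 = "a1 * (cc m)^2" let ?g2 = "a2 * (cc m)^2" let ?g3 = "a3 * (cc m)^2"
  let ?DC = "delta m * cc m" let ?M = "(dd m)^2 * (a1 + a2 + a3)"
  let ?F = "fform m a1 a2 a3"
  note K = kv[OF assms(1), of a1 a2 a3]
  have DC: "?DC > 0" using basics[OF assms(1)] by simp
  have minv: "coset_min ?g1 ?g2 ?g3 ?V ?V ?V = of_int ?M"
    unfolding coset_min_def
  proof (rule cInf_eq_minimum)
    show "of_int ?M \<in> {coset_val ?g1 ?g2 ?g3 ?V ?V ?V x1 x2 x3 |x1 x2 x3. True}"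
    proof -
      have "coset_val ?g1 ?g2 ?g3 ?V ?V ?V 0 0 0 = of_int ?M" using K[of 0 0 0] fzero by simp
      then show ?thesis by (metis (mono_tags, lifting) mem_Collect_eq)
    qed
  next
    fix y assume "y \<in> {coset_val ?g1 ?g2 ?g3 ?V ?V ?V x1 x2 x3 |x1 x2 x3. True}"
    then obtain x1 x2 x3 where y: "y = coset_val ?g1 ?g2 ?g3 ?V ?V ?V x1 x2 x3" by blast
    have "?DC * ?F x1 x2 x3 \<ge> 0" using DC fnonneg[OF assms, of x1 x2 x3] by simp
    then have "real_of_int ?M \<le> of_int (?DC * ?F x1 x2 x3 + ?M)" by linarith
    then show "of_int ?M \<le> y" unfolding y K .
  qed
  have rep: "coset_rep ?g1 ?g2 ?g3 ?V ?V ?V n \<longleftrightarrow> (\<exists>x1 x2 x3. ?DC * ?F x1 x2 x3 + ?M = n)" for n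
    unfolding coset_rep_def K of_int_eq_iff by simp
  have eqv: "(real_of_int a = of_int b + of_int c * of_int t) \<longleftrightarrow> a = b + c * t" for a b c t
    by (metis of_int_add of_int_mult of_int_eq_iff)
  have loc: "coset_loc_rep ?g1 ?g2 ?g3 ?V ?V ?V n \<longleftrightarrow>
     (\<forall>p::int. prime p \<longrightarrow> (\<forall>k::nat. \<exists>x1 x2 x3 t. ?DC * ?F x1 x2 x3 + ?M = n + p^k * t))" for n
    unfolding coset_loc_rep_def K eqv by simp
  show ?thesis
  proof
    assume R: "f_regular m a1 a2 a3"
    show "coset_tight_regular ?g1 ?g2 ?g3 ?V ?V ?V"
      unfolding coset_tight_regular_def minv of_int_le_iff
    proof (intro allI impI)
      fix n assume L: "coset_loc_rep ?g1 ?g2 ?g3 ?V ?V ?V n" and nge: "?M \<le> n"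
      have Lp: "\<forall>p::int. prime p \<longrightarrow> (\<forall>k::nat. \<exists>x1 x2 x3 t. ?DC * ?F x1 x2 x3 + ?M = n + p^k * t)"
        using L loc by blast
      have dv: "?DC dvd n - ?M"
      proof (cases "n - ?M = 0")
        case False
        show ?thesis
        proof (rule multiplicity_le_imp_dvd)
          show "?DC \<noteq> 0" using basics[OF assms(1)] by simp
          fix p :: int assume p: "prime p"
          define e where "e = multiplicity p ?DC"
          obtain x1 x2 x3 t where xt: "?DC * ?F x1 x2 x3 + ?M = n + p^e * t" using Lp p by blast
          have "p^e dvd ?DC" unfolding e_def by (rule multiplicity_dvd)
          then have "p^e dvd ?DC * ?F x1 x2 x3 - p^e * t" by simp
          also have "?DC * ?F x1 x2 x3 - p^e * t = n - ?M" using xt by simp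
          finally have "p^e dvd n - ?M" .
          then show "multiplicity p ?DC \<le> multiplicity p (n - ?M)"
            unfolding e_def using False p by (intro multiplicity_geI) (auto simp: not_prime_unit)
        qed
      qed simp
      then obtain n' where n': "n - ?M = ?DC * n'" by (elim dvdE)
      have "?DC * n' \<ge> 0" using n' nge by simp
      then have n'0: "n' \<ge> 0" using DC by (simp add: zero_le_mult_iff)
      have "f_loc_rep m a1 a2 a3 n'"
        unfolding f_loc_rep_def
      proof (intro conjI allI impI)
        show "\<exists>x1 x2 x3. fformR m a1 a2 a3 x1 x2 x3 = of_int n'"
          using real_rep[OF assms(1,2) n'0] by blast
        fix p :: int assume p: "prime p"
        show "f_loc_Zp m a1 a2 a3 p n'"
          unfolding f_loc_Zp_def
        proof
          fix k :: nat
          define e where "e = multiplicity p ?DC"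
          obtain u where u: "?DC = p^e * u" "\<not> p dvd u"
            unfolding e_def
          proof (rule multiplicity_decompose')
            show "?DC \<noteq> 0" using basics[OF assms(1)] by simp
            show "\<not> is_unit p" using p by (auto simp: not_prime_unit)
          qed
          obtain x1 x2 x3 t where xt: "?DC * ?F x1 x2 x3 + ?M = n + p^(k+e) * t" using Lp p by blast
          have "?DC * (?F x1 x2 x3 - n') = p^(k+e) * t"
            using xt n' by (simp add: algebra_simps)
          then have "p^e * (u * (?F x1 x2 x3 - n')) = p^e * (p^k * t)"
            unfolding u(1) by (simp add: power_add ac_simps)
          moreover have "p^e \<noteq> 0" using p by simp
          ultimately have "u * (?F x1 x2 x3 - n') = p^k * t" by (metis mult_left_cancel)
          then have "p^k dvd u * (?F x1 x2 x3 - n')" by simp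
          moreover have "coprime (p^k) u" using prime_imp_coprime[OF p u(2)] by simp
          ultimately have "p^k dvd ?F x1 x2 x3 - n'" by (simp add: coprime_dvd_mult_right_iff)
          then show "\<exists>x1 x2 x3. [?F x1 x2 x3 = n'] (mod p ^ k)" by (auto simp: cong_iff_dvd_diff)
        qed
      qed
      then have "f_rep m a1 a2 a3 n'" using R n'0 unfolding f_regular_def by blast
      then obtain x1 x2 x3 where "?F x1 x2 x3 = n'" unfolding f_rep_def by blast
      then have "?DC * ?F x1 x2 x3 + ?M = n" using n' by simp
      then show "coset_rep ?g1 ?g2 ?g3 ?V ?V ?V n" using rep by blast
    qed
  next
    assume T: "coset_tight_regular ?g1 ?g2 ?g3 ?V ?V ?V"
    show "f_regular m a1 a2 a3"
      unfolding f_regular_def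
    proof (intro allI impI)
      fix n' assume n'0: "n' \<ge> 0" and FL: "f_loc_rep m a1 a2 a3 n'"
      define n where "n = ?DC * n' + ?M"
      have nge: "?M \<le> n" using n'0 DC unfolding n_def by simp
      have "coset_loc_rep ?g1 ?g2 ?g3 ?V ?V ?V n"
        unfolding loc
      proof (intro allI impI)
        fix p :: int and k :: nat assume p: "prime p"
        have "f_loc_Zp m a1 a2 a3 p n'" using FL p unfolding f_loc_rep_def by blast
        then obtain x1 x2 x3 where "[?F x1 x2 x3 = n'] (mod p ^ k)" unfolding f_loc_Zp_def by blast
        then obtain s where s: "n' = ?F x1 x2 x3 + p^k * s" by (auto simp: cong_iff_lin)
        have "?DC * ?F x1 x2 x3 + ?M = n + p^k * (- ?DC * s)" unfolding n_def s by (simp add: algebra_simps)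
        then show "\<exists>x1 x2 x3 t. ?DC * ?F x1 x2 x3 + ?M = n + p^k * t" by blast
      qed
      then have "coset_rep ?g1 ?g2 ?g3 ?V ?V ?V n"
        using T nge unfolding coset_tight_regular_def minv of_int_le_iff by blast
      then obtain x1 x2 x3 where "?DC * ?F x1 x2 x3 + ?M = n" using rep by blast
      then have "?DC * ?F x1 x2 x3 = ?DC * n'" unfolding n_def by simp
      then have "?F x1 x2 x3 = n'" using basics[OF assms(1)] by simp
      then show "f_rep m a1 a2 a3 n'" unfolding f_rep_def by blast
    qed
  qed
qed
end
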